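(* For every $k\ge 0$, $\mathbf F_{k+1}=\mathbf T\,\mathbf F_k$; that is, for every $a$-subset $I$ of $[-b,a-1]$, $\mathbf F_{k+1}[I]=\sum_J \mathbf T[I,J]\,\mathbf F_k[J]$, the sum running over all $a$-subsets $J$ of $[-b,a-1]$.
   Context: Let $S$ be a finite set of integers with $a:=\max S\ge 1$ and $b:=-\min S\ge 1$. Each $s\in S$ carries a weight $\omega_s$ in a field $K$ of characteristic $0$; set $\omega_s:=0$ for $s\in\mathbb Z\setminus S$, and for $s\in\mathbb Z$ put $\beta_s:=\delta_{s,0}-\omega_s$. Notation: $[m,n]:=\{i\in\mathbb Z: m\le i\le n\}$, $\mathbb N=\{0,1,2,\dots\}$, $\mathbb N_{\ge n}:=\{i\in\mathbb Z:i\ge n\}$, $X+c:=\{x+c:x\in X\}$; an $n$-subset is a subset of cardinality $n$. Given an integer $c$ and a finite set $I\subseteq\{i\in\mathbb Z:i<c\}$, an $(I,c)$-permutation of order $k\ge0$ is a bijection $\sigma:\mathbb N\to I\cup\mathbb N_{\ge c}$ with $\sigma(n)=n$ for all $n\ge k$; its number of inversions is $\mathrm{inv}(\sigma)=\#\{(i,j)\in\mathbb N^2:i<j,\ \sigma(i)>\sigma(j)\}$ and its signature is $\epsilon(\sigma)=(-1)^{\mathrm{inv}(\sigma)}$. For an $a$-subset $I$ of $[-b,a-1]$, $\mathfrak S_k^{(I)}$ denotes the (finite) set of $(I,a)$-permutations of order $k$, and for $\sigma\in\mathfrak S_k^{(I)}$, $\beta(\sigma):=\epsilon(\sigma)\prod_{i=0}^{k-1}\beta_{\sigma(i)-i}$.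 $\mathbf F_k$ is the vector indexed by the $a$-subsets of $[-b,a-1]$ with $\mathbf F_k[I]:=\sum_{\sigma\in\mathfrak S_k^{(I)}}\beta(\sigma)$. For a finite set $I\subseteq\mathbb Z$ and $s\in\mathbb Z$, $\epsilon_s(I):=(-1)^{\#\{i\in I:\ i<s\}}$. $\mathbf T$ is the square matrix with rows and columns indexed by the $a$-subsets of $[-b,a-1]$ and entries $\mathbf T[I,J]:=\epsilon_s(I)\beta_s$ if there is an integer $s$ with $I\cup\{a\}=(J+1)\cup\{s\}$ (such $s$ is then unique), and $\mathbf T[I,J]:=0$ otherwise. *)

theory Defs
  imports Main
begin

definition omega :: "int set \<Rightarrow> (int \<Rightarrow> 'k::field_char_0) \<Rightarrow> int \<Rightarrow> 'k" where
  "omega S w s = (if s \<in> S then w s else 0)"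

definition beta :: "int set \<Rightarrow> (int \<Rightarrow> 'k::field_char_0) \<Rightarrow> int \<Rightarrow> 'k" where
  "beta S w s = (if s = 0 then 1 else 0) - omega S w s"

definition Icperm :: "int set \<Rightarrow> int \<Rightarrow> nat \<Rightarrow> (nat \<Rightarrow> int) \<Rightarrow> bool" where
  "Icperm I c k \<sigma> \<longleftrightarrow> bij_betw \<sigma> UNIV (I \<union> {c..}) \<and> (\<forall>n\<ge>k. \<sigma> n = int n)"

definition inv_count :: "(nat \<Rightarrow> int) \<Rightarrow> nat" where
  "inv_count \<sigma> = card {(i, j). i < j \<and> \<sigma> i > \<sigma> j}"

definition sgn_perm :: "(nat \<Rightarrow> int) \<Rightarrow> 'k::field_char_0" where
  "sgn_perm \<sigma> = (-1) ^ inv_count \<sigma>"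

definition beta_perm :: "int set \<Rightarrow> (int \<Rightarrow> 'k::field_char_0) \<Rightarrow> nat \<Rightarrow> (nat \<Rightarrow> int) \<Rightarrow> 'k" where
  "beta_perm S w k \<sigma> = sgn_perm \<sigma> * (\<Prod>i<k. beta S w (\<sigma> i - int i))"

definition amax :: "int set \<Rightarrow> int" where "amax S = Max S"
definition bmin :: "int set \<Rightarrow> int" where "bmin S = - Min S"

definition Fvec :: "int set \<Rightarrow> (int \<Rightarrow> 'k::field_char_0) \<Rightarrow> nat \<Rightarrow> int set \<Rightarrow> 'k" where
  "Fvec S w k I = (\<Sum>\<sigma>\<in>{\<sigma>. Icperm I (amax S) k \<sigma>}. beta_perm S w k \<sigma>)"

definition eps_s :: "int \<Rightarrow> int set \<Rightarrow> 'k::field_char_0" where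
  "eps_s s I = (-1) ^ card {i\<in>I. i < s}"

definition Tmat :: "int set \<Rightarrow> (int \<Rightarrow> 'k::field_char_0) \<Rightarrow> int set \<Rightarrow> int set \<Rightarrow> 'k" where
  "Tmat S w I J =
     (if \<exists>s. insert (amax S) I = (\<lambda>x. x + 1) ` J \<union> {s}
      then (let s = THE s. insert (amax S) I = (\<lambda>x. x + 1) ` J \<union> {s}
            in eps_s s I * beta S w s)
      else 0)"

definition asubsets :: "int set \<Rightarrow> int set set" where
  "asubsets S = {I. I \<subseteq> {- bmin S .. amax S - 1} \<and> card I = nat (amax S)}"

end

theory Submission
  imports Defs "HOL-Library.FuncSet"
begin

lemma Icperm_inj: "Icperm I c k \<sigma> \<Longrightarrow> inj \<sigma>"
  unfolding Icperm_def bij_betw_def by blast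

lemma Icperm_fix: "Icperm I c k \<sigma> \<Longrightarrow> k \<le> n \<Longrightarrow> \<sigma> n = int n"
  unfolding Icperm_def by blast

lemma Icperm_img: "Icperm I c k \<sigma> \<Longrightarrow> \<sigma> ` UNIV = I \<union> {c..}"
  unfolding Icperm_def bij_betw_def by blast

lemma Icperm_range: "Icperm I c k \<sigma> \<Longrightarrow> \<sigma> n \<in> I \<union> {c..}"
  using Icperm_img by blast

lemma Icperm_lt:
  assumes "Icperm I c k \<sigma>" "n < k" shows "\<sigma> n < int k"
proof (rule ccontr)
  assume "\<not> \<sigma> n < int k"
  hence ge: "\<sigma> n \<ge> int k" by simp
  define m where "m = nat (\<sigma> n)"
  have "k \<le> m" using ge unfolding m_def by linarith
  hence "\<sigma> m = int m" using Icperm_fix[OF assms(1)] by blast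
  also have "int m = \<sigma> n" using ge unfolding m_def by simp
  finally have "m = n" using Icperm_inj[OF assms(1)] by (simp add: inj_eq)
  thus False using \<open>k \<le> m\<close> assms(2) by simp
qed

lemma Icperm_finite:
  assumes "finite I" shows "finite {\<sigma>. Icperm I c k \<sigma>}"
proof -
  let ?g = "\<lambda>f::nat\<Rightarrow>int. \<lambda>n. if n < k then f n else int n"
  have "{\<sigma>. Icperm I c k \<sigma>} \<subseteq> ?g ` ({..<k} \<rightarrow>\<^sub>E (I \<union> {c..<int k}))"
  proof
    fix \<sigma> assume "\<sigma> \<in> {\<sigma>. Icperm I c k \<sigma>}"
    hence P: "Icperm I c k \<sigma>" by simp
    have "restrict \<sigma> {..<k} \<in> {..<k} \<rightarrow>\<^sub>E (I \<union> {c..<int k})"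
      using Icperm_range[OF P] Icperm_lt[OF P] by auto
    moreover have "\<sigma> = ?g (restrict \<sigma> {..<k})"
      using Icperm_fix[OF P] by (auto simp: fun_eq_iff)
    ultimately show "\<sigma> \<in> ?g ` ({..<k} \<rightarrow>\<^sub>E (I \<union> {c..<int k}))" by blast
  qed
  moreover have "finite ({..<k} \<rightarrow>\<^sub>E (I \<union> {c..<int k}))"
    using assms by (intro finite_PiE) auto
  ultimately show ?thesis by (meson finite_subset finite_imageI)
qed

lemma inv_set_sub:
  assumes "Icperm I c k \<sigma>"
  shows "{(i,j). i<j \<and> \<sigma> i > \<sigma> j} \<subseteq> {..<k} \<times> {..<k}"
proof
  fix p assume "p \<in> {(i,j). i<j \<and> \<sigma> i > \<sigma> j}"
  then obtain i j where p: "p = (i,j)" "i<j" "\<sigma> i > \<sigma> j" by blast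
  have "j < k"
  proof (rule ccontr)
    assume nj: "\<not> j<k"
    hence sj: "\<sigma> j = int j" using Icperm_fix[OF assms] by simp
    have "i < k"
    proof (rule ccontr)
      assume "\<not> i < k" hence "\<sigma> i = int i" using Icperm_fix[OF assms] by simp
      thus False using p sj by simp
    qed
    hence "\<sigma> i < int k" by (rule Icperm_lt[OF assms])
    thus False using p sj nj by simp
  qed
  thus "p \<in> {..<k} \<times> {..<k}" using p by simp
qed

lemma inv_finite: "Icperm I c k \<sigma> \<Longrightarrow> finite {(i,j). i<j \<and> \<sigma> i > \<sigma> j}"
  using inv_set_sub by (meson finite_SigmaI finite_lessThan finite_subset)

definition shiftL :: "(nat \<Rightarrow> int) \<Rightarrow> nat \<Rightarrow> int" where
  "shiftL \<sigma> n = \<sigma> (Suc n) - 1"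

definition consP :: "int \<Rightarrow> (nat \<Rightarrow> int) \<Rightarrow> nat \<Rightarrow> int" where
  "consP s \<tau> n = (if n = 0 then s else \<tau> (n - 1) + 1)"

lemma consP_shiftL: "consP (\<sigma> 0) (shiftL \<sigma>) = \<sigma>"
  by (auto simp: fun_eq_iff consP_def shiftL_def not0_implies_Suc)

lemma shiftL_consP: "shiftL (consP s \<tau>) = \<tau>"
  by (auto simp: fun_eq_iff consP_def shiftL_def)

lemma consP_0[simp]: "consP s \<tau> 0 = s"
  by (simp add: consP_def)


lemma shiftL_perm:
  assumes P: "Icperm I a (Suc k) \<sigma>" and s0: "\<sigma> 0 \<in> insert a I" and Ilt: "\<forall>x\<in>I. x < a"
  shows "Icperm ((\<lambda>x. x - 1) ` (insert a I - {\<sigma> 0})) a k (shiftL \<sigma>)"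
proof -
  have inj: "inj \<sigma>" using Icperm_inj[OF P] .
  have img: "\<sigma> ` UNIV = I \<union> {a..}" using Icperm_img[OF P] .
  have "inj (shiftL \<sigma>)"
    by (rule injI) (use inj in \<open>auto simp: shiftL_def inj_eq\<close>)
  moreover have "shiftL \<sigma> ` UNIV = (\<lambda>x. x - 1) ` (insert a I - {\<sigma> 0}) \<union> {a..}"
  proof (intro equalityI subsetI)
    fix y assume "y \<in> shiftL \<sigma> ` UNIV"
    then obtain n where y: "y = \<sigma> (Suc n) - 1" by (auto simp: shiftL_def)
    have ne: "\<sigma> (Suc n) \<noteq> \<sigma> 0" using inj by (auto simp: inj_eq)
    have r: "\<sigma> (Suc n) \<in> I \<union> {a..}" using img by blast
    show "y \<in> (\<lambda>x. x - 1) ` (insert a I - {\<sigma> 0}) \<union> {a..}"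
    proof (cases "\<sigma> (Suc n) \<in> insert a I")
      case True thus ?thesis using ne y by blast
    next
      case False thus ?thesis using r y by auto
    qed
  next
    fix y assume y: "y \<in> (\<lambda>x. x - 1) ` (insert a I - {\<sigma> 0}) \<union> {a..}"
    obtain z where z: "y = z - 1" "z \<in> I \<union> {a..}" "z \<noteq> \<sigma> 0"
    proof (cases "y \<in> (\<lambda>x. x - 1) ` (insert a I - {\<sigma> 0})")
      case True thus ?thesis using that by auto
    next
      case False
      hence "y \<ge> a" using y by auto
      moreover have "\<sigma> 0 \<le> a" using s0 Ilt by auto
      ultimately show ?thesis using that[of "y+1"] by auto
    qed
    then obtain n where n: "\<sigma> n = z" using img by (metis rangeE)
    have "n \<noteq> 0" using n z by (metis)
    then obtain m where "n = Suc m" using not0_implies_Suc by blast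
    thus "y \<in> shiftL \<sigma> ` UNIV" using n z by (auto simp: shiftL_def)
  qed
  moreover have "\<forall>n\<ge>k. shiftL \<sigma> n = int n"
    using Icperm_fix[OF P] by (auto simp: shiftL_def)
  ultimately show ?thesis unfolding Icperm_def bij_betw_def by blast
qed

lemma consP_perm:
  assumes P: "Icperm J a k \<tau>" and eqs: "insert a I = (\<lambda>x. x + 1) ` J \<union> {s}"
    and sn: "s \<notin> (\<lambda>x. x + 1) ` J" and Ilt: "\<forall>x\<in>I. x < a"
  shows "Icperm I a (Suc k) (consP s \<tau>)"
proof -
  have inj: "inj \<tau>" using Icperm_inj[OF P] .
  have img: "\<tau> ` UNIV = J \<union> {a..}" using Icperm_img[OF P] .
  have sa: "s \<le> a" using eqs Ilt by (metis Un_insert_right insertI1 insert_iff less_le order_refl)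
  have nes: "\<tau> n + 1 \<noteq> s" for n
  proof
    assume h: "\<tau> n + 1 = s"
    have "\<tau> n \<in> J \<union> {a..}" using img by blast
    thus False using h sn sa by auto
  qed
  have "inj (consP s \<tau>)"
  proof (rule injI)
    fix m n assume h: "consP s \<tau> m = consP s \<tau> n"
    show "m = n"
    proof (cases m)
      case 0 thus ?thesis using h nes by (cases n) (auto simp: consP_def)
    next
      case (Suc m')
      thus ?thesis using h nes inj by (cases n) (auto simp: consP_def inj_eq)
    qed
  qed
  moreover have "consP s \<tau> ` UNIV = I \<union> {a..}"
  proof (intro equalityI subsetI)
    fix y assume "y \<in> consP s \<tau> ` UNIV"
    then obtain n where y: "y = consP s \<tau> n" by blast
    show "y \<in> I \<union> {a..}"
    proof (cases n)
      case 0 thus ?thesis using y eqs by (auto simp: consP_def)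
    next
      case (Suc m)
      have "\<tau> m \<in> J \<union> {a..}" using img by blast
      thus ?thesis using y Suc eqs by (auto simp: consP_def)
    qed
  next
    fix y assume y: "y \<in> I \<union> {a..}"
    show "y \<in> consP s \<tau> ` UNIV"
    proof (cases "y = s")
      case True thus ?thesis by (metis consP_0 rangeI)
    next
      case False
      have "y - 1 \<in> J \<union> {a..}"
      proof (cases "y \<in> insert a I")
        case True thus ?thesis using False eqs by force
      next
        case False thus ?thesis using y by auto
      qed
      then obtain m where "\<tau> m = y - 1" using img by (metis rangeE)
      hence "consP s \<tau> (Suc m) = y" by (simp add: consP_def)
      thus ?thesis by (metis rangeI)
    qed
  qed
  moreover have "\<forall>n\<ge>Suc k. consP s \<tau> n = int n"
    using Icperm_fix[OF P] by (auto simp: consP_def)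
  ultimately show ?thesis unfolding Icperm_def bij_betw_def by blast
qed


lemma inv_split:
  assumes P: "Icperm I a (Suc k) \<sigma>" and sa: "\<sigma> 0 \<le> a"
  shows "inv_count \<sigma> = card {i\<in>I. i < \<sigma> 0} + inv_count (shiftL \<sigma>)"
proof -
  define X where "X = {(i,j). i<j \<and> \<sigma> i > \<sigma> j}"
  define Y where "Y = {(i,j). i<j \<and> shiftL \<sigma> i > shiftL \<sigma> j}"
  define B where "B = {j. 0<j \<and> \<sigma> j < \<sigma> 0}"
  define A0 where "A0 = Pair (0::nat) ` B"
  define A1 where "A1 = (\<lambda>(i,j). (Suc i, Suc j)) ` Y"
  have inj: "inj \<sigma>" using Icperm_inj[OF P] .
  have img: "\<sigma> ` UNIV = I \<union> {a..}" using Icperm_img[OF P] .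
  have XU: "X = A0 \<union> A1"
  proof (intro equalityI subsetI)
    fix p assume "p \<in> X"
    then obtain i j where p: "p=(i,j)" "i<j" "\<sigma> j < \<sigma> i" by (auto simp: X_def)
    show "p \<in> A0 \<union> A1"
    proof (cases i)
      case 0 thus ?thesis using p by (auto simp: A0_def B_def)
    next
      case (Suc i')
      then obtain j' where j: "j = Suc j'" using p(2) by (cases j) auto
      hence "(i',j') \<in> Y" using p Suc by (auto simp: Y_def shiftL_def)
      hence "(Suc i', Suc j') \<in> A1" unfolding A1_def by (rule rev_image_eqI) simp
      thus ?thesis using p Suc j by simp
    qed
  next
    fix p assume "p \<in> A0 \<union> A1" thus "p \<in> X"
      by (auto simp: A0_def A1_def X_def Y_def shiftL_def B_def)
  qed
  have dis: "A0 \<inter> A1 = {}" by (auto simp: A0_def A1_def)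
  have finX: "finite X" using inv_finite[OF P] by (simp add: X_def)
  have fA0: "finite A0" "finite A1" using finX XU by auto
  have injS: "inj_on (\<lambda>(i,j). (Suc i, Suc j)) Y" by (auto simp: inj_on_def)
  have cA1: "card A1 = card Y" unfolding A1_def using injS by (rule card_image)
  have cA0: "card A0 = card B" unfolding A0_def by (rule card_image) (auto simp: inj_on_def)
  have "\<sigma> ` B = {i\<in>I. i < \<sigma> 0}"
  proof (intro equalityI subsetI)
    fix x assume "x \<in> \<sigma> ` B"
    then obtain j where j: "x = \<sigma> j" "\<sigma> j < \<sigma> 0" by (auto simp: B_def)
    have "\<sigma> j \<in> I \<union> {a..}" using img by blast
    thus "x \<in> {i\<in>I. i < \<sigma> 0}" using j sa by auto
  next
    fix x assume x: "x \<in> {i\<in>I. i < \<sigma> 0}"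
    then obtain j where j: "\<sigma> j = x" using img by (metis UnI1 mem_Collect_eq rangeE)
    have "j \<noteq> 0" using j x by (metis (mono_tags, lifting) mem_Collect_eq order_less_irrefl)
    thus "x \<in> \<sigma> ` B" using j x by (auto simp: B_def)
  qed
  moreover have "card (\<sigma> ` B) = card B" using inj by (simp add: card_image inj_on_subset)
  ultimately have cB: "card B = card {i\<in>I. i < \<sigma> 0}" by simp
  have "inv_count \<sigma> = card X" by (simp add: inv_count_def X_def)
  also have "\<dots> = card A0 + card A1" using XU dis fA0 by (simp add: card_Un_disjoint)
  also have "\<dots> = card {i\<in>I. i < \<sigma> 0} + inv_count (shiftL \<sigma>)"
    using cA0 cA1 cB by (simp add: inv_count_def Y_def)
  finally show ?thesis .
qed

lemma beta_zero:
  assumes "finite S" "x \<noteq> 0" "x > Max S \<or> x < Min S"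
  shows "beta S w x = 0"
proof -
  have "x \<notin> S" using assms Max_ge[OF assms(1), of x] Min_le[OF assms(1), of x] by linarith
  thus ?thesis using assms(2) by (simp add: beta_def omega_def)
qed

lemma bp_zero:
  assumes P: "Icperm I a (Suc k) \<sigma>" and fin: "finite S" and aS: "a = Max S" and bS: "-b = Min S"
    and a1: "a \<ge> 1" and b1: "b \<ge> 1" and Isub: "I \<subseteq> {-b..a-1}"
    and bad: "\<sigma> 0 \<notin> insert a I \<or> \<not> (\<lambda>x. x - 1) ` (insert a I - {\<sigma> 0}) \<subseteq> {-b..a-1}"
  shows "beta_perm S w (Suc k) \<sigma> = 0"
proof -
  have img: "\<sigma> ` UNIV = I \<union> {a..}" using Icperm_img[OF P] .
  have "\<exists>i\<in>{..<Suc k}. beta S w (\<sigma> i - int i) = 0"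
  proof (cases "\<sigma> 0 \<in> insert a I")
    case False
    have "\<sigma> 0 \<in> I \<union> {a..}" using img by blast
    hence "\<sigma> 0 > a" using False by auto
    hence "beta S w (\<sigma> 0 - int 0) = 0" using a1 aS by (intro beta_zero[OF fin]) auto
    thus ?thesis by blast
  next
    case True
    with bad obtain y where y: "y \<in> (\<lambda>x. x - 1) ` (insert a I - {\<sigma> 0})" "y \<notin> {-b..a-1}" by blast
    then obtain z where z: "z \<in> insert a I" "z \<noteq> \<sigma> 0" "y = z - 1" by auto
    have "z \<le> a" using z Isub by auto
    hence "y < -b" using y z by auto
    hence zI: "z \<in> I" "z < 1 - b" using z a1 b1 by auto
    then obtain m where m: "\<sigma> m = z" using img by (metis UnI1 rangeE)
    have m0: "m \<noteq> 0" using m z by metis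
    have mk: "m < Suc k"
    proof (rule ccontr)
      assume "\<not> m < Suc k" hence "\<sigma> m = int m" using Icperm_fix[OF P] by simp
      thus False using m zI b1 by auto
    qed
    have "\<sigma> m - int m < Min S" using m m0 zI bS by auto
    moreover have "\<sigma> m - int m \<noteq> 0" using m zI b1 by auto
    ultimately have "beta S w (\<sigma> m - int m) = 0" by (intro beta_zero[OF fin]) auto
    thus ?thesis using mk by blast
  qed
  hence "(\<Prod>i<Suc k. beta S w (\<sigma> i - int i)) = 0" by (intro prod_zero) auto
  thus ?thesis unfolding beta_perm_def by simp
qed


theorem mainTheorem3:
  fixes S :: "int set" and w :: "int \<Rightarrow> 'k::field_char_0" and k :: nat and I :: "int set"
  assumes "finite S" and "S \<noteq> {}" and "amax S \<ge> 1" and "bmin S \<ge> 1"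
    and "I \<in> asubsets S"
  shows "Fvec S w (k + 1) I = (\<Sum>J\<in>asubsets S. Tmat S w I J * Fvec S w k J)"
proof -
  define a where "a = amax S"
  define b where "b = bmin S"
  have aS: "a = Max S" and bS: "-b = Min S" by (simp_all add: a_def b_def amax_def bmin_def)
  have a1: "a \<ge> 1" and b1: "b \<ge> 1" using assms(3,4) a_def b_def by simp_all
  have Isub: "I \<subseteq> {-b..a-1}" and cI: "card I = nat a" using assms(5) by (simp_all add: asubsets_def a_def b_def)
  have finI: "finite I" using Isub finite_subset by blast
  have Ilt: "\<forall>x\<in>I. x < a" using Isub by auto
  have aI: "a \<notin> I" using Ilt by auto
  have cIa: "card (insert a I) = nat a + 1" using aI finI cI by simp
  define Jof where "Jof \<sigma> = (\<lambda>x. x - 1) ` (insert a I - {\<sigma> 0})" for \<sigma> :: "nat \<Rightarrow> int"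
  define sOf where "sOf J = (THE s. insert a I = (\<lambda>x. x + 1) ` J \<union> {s})" for J
  define A where "A = asubsets S"
  have A_eq: "A = {J. J \<subseteq> {-b..a-1} \<and> card J = nat a}" by (simp add: A_def asubsets_def a_def b_def)
  have finA: "finite A" unfolding A_eq by (rule finite_subset[of _ "Pow {-b..a-1}"]) auto
  have finJ: "\<forall>J\<in>A. finite J" using A_eq by (auto intro: finite_subset)
  define P where "P J m = {\<sigma>. Icperm J a m \<sigma>}" for J m
  define Sg where "Sg = Sigma A (\<lambda>J. P J k)"
  define g where "g \<sigma> = beta_perm S w (Suc k) \<sigma>" for \<sigma>
  define h where "h = (\<lambda>(J,\<tau>). Tmat S w I J * beta_perm S w k \<tau>)"
  define S0 where "S0 = {\<sigma> \<in> P I (Suc k). \<sigma> 0 \<in> insert a I \<and> Jof \<sigma> \<subseteq> {-b..a-1}}"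
  define T0 where "T0 = {p \<in> Sg. \<exists>s. insert a I = (\<lambda>x. x+1) ` (fst p) \<union> {s}}"
  have sOf_eq: "sOf J = t" if "insert a I = (\<lambda>x. x + 1) ` J \<union> {t}" "t \<notin> (\<lambda>x. x + 1) ` J" for J t
    unfolding sOf_def using that by (intro the_equality) blast+
  have TmD: "Tmat S w I J = (if \<exists>s. insert a I = (\<lambda>x. x + 1) ` J \<union> {s}
      then eps_s (sOf J) I * beta S w (sOf J) else 0)" for J
    by (simp add: Tmat_def sOf_def a_def Let_def)
  have Tm: "Tmat S w I J = eps_s t I * beta S w t"
    if "insert a I = (\<lambda>x. x + 1) ` J \<union> {t}" "t \<notin> (\<lambda>x. x + 1) ` J" for J t
    using that TmD[of J] sOf_eq[OF that] by auto
  have sn: "s \<notin> (\<lambda>x. x+1) ` J" if "J \<in> A" "insert a I = (\<lambda>x. x + 1) ` J \<union> {s}" for J s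
  proof
    assume "s \<in> (\<lambda>x. x+1) ` J"
    hence "insert a I = (\<lambda>x. x + 1) ` J" using that by blast
    moreover have "card ((\<lambda>x. x + 1) ` J) = nat a"
      using that A_eq by (subst card_image) (auto simp: inj_on_def)
    ultimately show False using cIa by simp
  qed
  have LHS: "Fvec S w (k+1) I = sum g (P I (Suc k))" by (simp add: Fvec_def g_def P_def a_def)
  have RHS: "(\<Sum>J\<in>asubsets S. Tmat S w I J * Fvec S w k J) = sum h Sg"
  proof -
    have "(\<Sum>J\<in>asubsets S. Tmat S w I J * Fvec S w k J)
        = (\<Sum>J\<in>A. \<Sum>\<tau>\<in>P J k. Tmat S w I J * beta_perm S w k \<tau>)"
      by (simp add: A_def Fvec_def P_def a_def sum_distrib_left)
    also have "\<dots> = sum h Sg" unfolding Sg_def h_def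
      by (rule sum.Sigma) (use finA finJ Icperm_finite in \<open>auto simp: P_def\<close>)
    finally show ?thesis .
  qed
  have finP: "finite (P I (Suc k))" using Icperm_finite[OF finI] by (simp add: P_def)
  have finSg: "finite Sg" unfolding Sg_def using finA finJ Icperm_finite
    by (intro finite_SigmaI) (auto simp: P_def)
  have L1: "sum g (P I (Suc k)) = sum g S0"
  proof (rule sum.mono_neutral_right[OF finP])
    show "S0 \<subseteq> P I (Suc k)" by (auto simp: S0_def)
    show "\<forall>i\<in>P I (Suc k) - S0. g i = 0"
    proof
      fix \<sigma> assume "\<sigma> \<in> P I (Suc k) - S0"
      hence "Icperm I a (Suc k) \<sigma>" "\<sigma> 0 \<notin> insert a I \<or> \<not> Jof \<sigma> \<subseteq> {-b..a-1}"
        by (auto simp: S0_def P_def)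
      thus "g \<sigma> = 0" unfolding g_def Jof_def
        by (intro bp_zero[OF _ assms(1) aS bS a1 b1 Isub]) auto
    qed
  qed
  have R1: "sum h Sg = sum h T0"
  proof (rule sum.mono_neutral_right[OF finSg])
    show "T0 \<subseteq> Sg" by (auto simp: T0_def)
    show "\<forall>i\<in>Sg - T0. h i = 0"
    proof
      fix p assume "p \<in> Sg - T0"
      then obtain J \<tau> where "p = (J,\<tau>)" "\<not> (\<exists>s. insert a I = (\<lambda>x. x+1) ` J \<union> {s})"
        by (cases p) (auto simp: T0_def)
      thus "h p = 0" by (simp add: h_def TmD)
    qed
  qed
  have M: "sum g S0 = sum h T0"
  proof (rule sum.reindex_bij_witness[of S0 "\<lambda>p. consP (sOf (fst p)) (snd p)" "\<lambda>\<sigma>. (Jof \<sigma>, shiftL \<sigma>)"])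
    fix \<sigma> assume "\<sigma> \<in> S0"
    hence P: "Icperm I a (Suc k) \<sigma>" and s0: "\<sigma> 0 \<in> insert a I" and Jsub: "Jof \<sigma> \<subseteq> {-b..a-1}"
      by (auto simp: S0_def P_def)
    have eqJ: "insert a I = (\<lambda>x. x + 1) ` Jof \<sigma> \<union> {\<sigma> 0}"
      using s0 by (auto simp: Jof_def image_image)
    have nJ: "\<sigma> 0 \<notin> (\<lambda>x. x + 1) ` Jof \<sigma>" by (auto simp: Jof_def image_image)
    have sO: "sOf (Jof \<sigma>) = \<sigma> 0" by (rule sOf_eq[OF eqJ nJ])
    show "consP (sOf (fst (Jof \<sigma>, shiftL \<sigma>))) (snd (Jof \<sigma>, shiftL \<sigma>)) = \<sigma>"
      using sO consP_shiftL by simp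
    have cJ: "card (Jof \<sigma>) = nat a"
    proof -
      have "card (Jof \<sigma>) = card (insert a I - {\<sigma> 0})" unfolding Jof_def
        by (rule card_image) (auto simp: inj_on_def)
      also have "\<dots> = nat a" using s0 cIa finI by simp
      finally show ?thesis .
    qed
    have "Jof \<sigma> \<in> A" using cJ Jsub A_eq by simp
    moreover have "shiftL \<sigma> \<in> P (Jof \<sigma>) k"
      using shiftL_perm[OF P s0 Ilt] by (simp add: P_def Jof_def)
    ultimately show "(Jof \<sigma>, shiftL \<sigma>) \<in> T0" using eqJ by (auto simp: T0_def Sg_def)
    have ts: "Tmat S w I (Jof \<sigma>) = eps_s (\<sigma> 0) I * beta S w (\<sigma> 0)" by (rule Tm[OF eqJ nJ])
    have sa: "\<sigma> 0 \<le> a" using s0 Ilt by auto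
    have sg: "sgn_perm \<sigma> = (eps_s (\<sigma> 0) I :: 'k) * sgn_perm (shiftL \<sigma>)"
      unfolding sgn_perm_def eps_s_def inv_split[OF P sa] by (simp add: power_add)
    have pr: "(\<Prod>i<Suc k. beta S w (\<sigma> i - int i)) =
        beta S w (\<sigma> 0) * (\<Prod>i<k. beta S w (shiftL \<sigma> i - int i))"
      by (subst prod.lessThan_Suc_shift) (simp add: shiftL_def algebra_simps)
    show "h (Jof \<sigma>, shiftL \<sigma>) = g \<sigma>"
      unfolding h_def g_def beta_perm_def using ts sg pr by simp
  next
    fix p assume "p \<in> T0"
    then obtain J \<tau> s where p: "p = (J,\<tau>)" and JA: "J \<in> A" and tP: "Icperm J a k \<tau>"
      and eqs: "insert a I = (\<lambda>x. x+1) ` J \<union> {s}"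
      by (auto simp: T0_def Sg_def P_def)
    have ns: "s \<notin> (\<lambda>x. x+1) ` J" by (rule sn[OF JA eqs])
    have sO: "sOf J = s" by (rule sOf_eq[OF eqs ns])
    have JJ: "Jof (consP s \<tau>) = J"
    proof -
      have "insert a I - {s} = (\<lambda>x. x+1) ` J" using eqs ns by blast
      thus ?thesis by (simp add: Jof_def image_image)
    qed
    show "(Jof (consP (sOf (fst p)) (snd p)), shiftL (consP (sOf (fst p)) (snd p))) = p"
      using p sO JJ shiftL_consP by simp
    have "consP s \<tau> \<in> P I (Suc k)" using consP_perm[OF tP eqs ns Ilt] by (simp add: P_def)
    moreover have "s \<in> insert a I" using eqs by blast
    moreover have "J \<subseteq> {-b..a-1}" using JA A_eq by simp
    ultimately show "consP (sOf (fst p)) (snd p) \<in> S0" using p sO JJ by (simp add: S0_def)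
  qed
  show ?thesis using LHS RHS L1 R1 M by simp
qed

end
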